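(* Let $d\geq 1$, let $p_1<\dots<p_d$ be the first $d$ prime numbers, let $N\geq 1$ be an integer, let $C>0$, and let $p\geq 1$ be real. For $1\le k\le d$ let $\mathbf{b}_k\in\mathbb{R}^{d+1}$ be the vector with entry $(\ln p_k)^{1/p}$ in coordinate $k$, entry $C\ln p_k$ in coordinate $d+1$, and zeros elsewhere, and let $\mathbf{t}=(0,\dots,0,C\ln N)^T\in\mathbb{R}^{d+1}$. Define $D_0=1$ and $$D_j=1+C^2\sum_{i=1}^j(\ln p_i)^{2-2/p},\qquad 1\le j\le d.$$ Let $\mathbf{b}_1^\star,\dots,\mathbf{b}_d^\star,\mathbf{t}^\star$ be the Gram–Schmidt orthogonalization of the ordered family $(\mathbf{b}_1,\dots,\mathbf{b}_d,\mathbf{t})$. Then for $1\le k\le d$ and $1\le i\le d+1$, $$(\mathbf{b}_k^\star)_i=\begin{cases}-\dfrac{C^2\ln p_k(\ln p_i)^{1-1/p}}{D_{k-1}} & i<k,\\ (\ln p_k)^{1/p} & i=k,\\ 0 & k<i<d+1,\\ \dfrac{C\ln p_k}{D_{k-1}} & i=d+1,\end{cases}$$ and $$(\mathbf{t}^\star)_i=\begin{cases}-\dfrac{C^2(\ln N)(\ln p_i)^{1-1/p}}{D_d} & i<d+1,\\ \dfrac{C\ln N}{D_d} & i=d+1.\end{cases}$$ Moreover $\|\mathbf{b}_k^\star\|_2^2=(\ln p_k)^{2/p}\dfrac{D_k}{D_{k-1}}$ for $1\le k\le d$, $\|\mathbf{t}^\star\|_2^2=\dfrac{(C\ln N)^2}{D_d}$,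 and the orthogonal projection $\mathbf{t}-\mathbf{t}^\star$ of $\mathbf{t}$ onto the span of $\mathbf{b}_1,\dots,\mathbf{b}_d$ is given by $$(\mathbf{t}-\mathbf{t}^\star)_i=\begin{cases}\dfrac{C^2(\ln N)(\ln p_i)^{1-1/p}}{D_d} & i<d+1,\\ \dfrac{C(\ln N)(D_d-1)}{D_d} & i=d+1.\end{cases}$$
   Context: $\ln$ is the natural logarithm, $\|\cdot\|_2$ the Euclidean norm, and $(\mathbf{v})_i$ denotes the $i$-th coordinate of $\mathbf{v}$. Gram–Schmidt orthogonalization of $(\mathbf{v}_1,\dots,\mathbf{v}_m)$: $\mathbf{v}_k^\star=\mathbf{v}_k-\sum_{j<k}\mu_{k,j}\mathbf{v}_j^\star$ with $\mu_{k,j}=\frac{\mathbf{v}_k\cdot\mathbf{v}_j^\star}{\mathbf{v}_j^\star\cdot\mathbf{v}_j^\star}$. *)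

theory Defs
  imports "HOL-Analysis.Analysis" "HOL-Computational_Algebra.Primes" "HOL-Library.Infinite_Set"
begin

text \<open>Vectors in R^n are represented as functions nat => real, coordinates 1..n
  (values outside {1..n} are irrelevant). Euclidean inner product on coordinates 1..n.\<close>
definition ipn :: "nat \<Rightarrow> (nat \<Rightarrow> real) \<Rightarrow> (nat \<Rightarrow> real) \<Rightarrow> real" where
  "ipn n x y = (\<Sum>i=1..n. x i * y i)"

definition sqnorm :: "nat \<Rightarrow> (nat \<Rightarrow> real) \<Rightarrow> real" where
  "sqnorm n x = (\<Sum>i=1..n. (x i)^2)"

function gso :: "nat \<Rightarrow> (nat \<Rightarrow> nat \<Rightarrow> real) \<Rightarrow> nat \<Rightarrow> nat \<Rightarrow> real" where
  "gso n v k = (\<lambda>i. v k i - (\<Sum>j\<in>{1..<k}.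
      (ipn n (v k) (gso n v j) / ipn n (gso n v j) (gso n v j)) * gso n v j i))"
  by pat_completeness auto
termination by (relation "Wellfounded.measure (\<lambda>(n, v, k). k)") auto

text \<open>The k-th prime, 1-based: nth_prime 1 = 2, nth_prime 2 = 3, ...\<close>
definition nth_prime :: "nat \<Rightarrow> nat" where
  "nth_prime k = enumerate {q::nat. prime q} (k - 1)"

end

theory Submission
  imports Defs
begin

declare gso.simps[simp del]

lemma sum3: "finite A \<Longrightarrow> finite B \<Longrightarrow> finite C \<Longrightarrow> A \<inter> B = {} \<Longrightarrow> A \<inter> C = {} \<Longrightarrow> B \<inter> C = {}
   \<Longrightarrow> sum f (A \<union> (B \<union> C)) = sum f A + (sum f B + sum f C)"
  by (simp add: sum.union_disjoint Int_Un_distrib)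

lemma split3: assumes h: "1 \<le> (j::nat)" "j \<le> n"
  shows "(\<Sum>i\<in>{1..n}. f i) = (\<Sum>i\<in>{1..<j}. f i) + ((\<Sum>i\<in>{j..<n}. f i) + (f n::real))"
proof -
  have e: "{1..n} = {1..<j} \<union> ({j..<n} \<union> {n})" using h by auto
  have "(\<Sum>i\<in>{1..n}. f i) = sum f ({1..<j} \<union> ({j..<n} \<union> {n}))" unfolding e ..
  also have "\<dots> = sum f {1..<j} + (sum f {j..<n} + sum f {n})" by (rule sum3) (use h in auto)
  finally show ?thesis by simp
qed

lemma split3b: assumes h: "1 \<le> (i::nat)" "i < k"
  shows "(\<Sum>j\<in>{1..<k}. f j) = (\<Sum>j\<in>{1..<i}. f j) + (f i + (\<Sum>j\<in>{i<..<k}. (f j::real)))"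
proof -
  have e: "{1..<k} = {1..<i} \<union> ({i} \<union> {i<..<k})" using h by auto
  have "(\<Sum>j\<in>{1..<k}. f j) = sum f ({1..<i} \<union> ({i} \<union> {i<..<k}))" unfolding e ..
  also have "\<dots> = sum f {1..<i} + (sum f {i} + sum f {i<..<k})" by (rule sum3) (use h in auto)
  finally show ?thesis by simp
qed


locale gsset =
  fixes n :: nat and a c w D :: "nat \<Rightarrow> real" and v :: "nat \<Rightarrow> nat \<Rightarrow> real"
  assumes n_ge: "n \<ge> 1"
    and a_pos: "\<And>k. 1 \<le> k \<Longrightarrow> k < n \<Longrightarrow> a k > 0"
    and v_eq: "\<And>k i. 1 \<le> k \<Longrightarrow> k \<le> n \<Longrightarrow> v k i = (if i = k \<and> k < n then a k else if i = n then c k else 0)"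
    and w_eq: "\<And>i. 1 \<le> i \<Longrightarrow> i < n \<Longrightarrow> w i = c i / a i"
    and D_eq: "\<And>j. D j = 1 + (\<Sum>i=1..j. (w i)^2)"
begin

lemma D_ge1: "D j \<ge> 1" by (simp add: D_eq sum_nonneg)
lemma D_pos: "D j > 0" using D_ge1[of j] by linarith
lemma D_Suc: "D (Suc j) = D j + (w (Suc j))^2" by (simp add: D_eq)
lemma D_0: "D 0 = 1" by (simp add: D_eq)

lemma tele_aux: "(x::real) > 0 \<Longrightarrow> y > 0 \<Longrightarrow> y = x + u \<Longrightarrow> u / (y * x) = 1/x - 1/y"
  by (simp add: field_simps)

lemma tele: "i \<le> m \<Longrightarrow> (\<Sum>j\<in>{i<..m}. (w j)^2 / (D j * D (j-1))) = 1 / D i - 1 / D m"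
proof (induction m)
  case 0 then show ?case by simp
next
  case (Suc m)
  show ?case
  proof (cases "i = Suc m")
    case True then show ?thesis by simp
  next
    case False
    then have im: "i \<le> m" using Suc.prems by simp
    have "{i<..Suc m} = insert (Suc m) {i<..m}" using im by auto
    then have "(\<Sum>j\<in>{i<..Suc m}. (w j)^2 / (D j * D (j-1))) = (w (Suc m))^2 / (D (Suc m) * D m) + (1 / D i - 1 / D m)"
      using Suc.IH[OF im] by simp
    also have "\<dots> = 1 / D i - 1 / D (Suc m)"
      using tele_aux[OF D_pos[of m] D_pos[of "Suc m"] D_Suc[of m]] by simp
    finally show ?thesis .
  qed
qed

definition G :: "nat \<Rightarrow> nat \<Rightarrow> real" where
  "G k i = (if i < k then - (c k * w i) / D (k-1) else if i = k \<and> k < n then a k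
            else if i < n then 0 else c k / D (k-1))"

lemma ipn_vG: assumes "1 \<le> j" "j < k" "k \<le> n"
  shows "ipn n (v k) (G j) = c k * c j / D (j-1)"
proof -
  have s: "{1..n} = insert n {1..<n}" using n_ge by auto
  have z: "(\<Sum>i\<in>{1..<n}. v k i * G j i) = 0"
    by (rule sum.neutral) (use assms in \<open>auto simp: v_eq G_def\<close>)
  have "v k n * G j n = c k * c j / D (j-1)"
    using assms by (simp add: v_eq G_def)
  then show ?thesis unfolding ipn_def s using z by simp
qed

lemma ipn_GG: assumes "1 \<le> j" "j \<le> n"
  shows "ipn n (G j) (G j) = (if j < n then (a j)^2 else 0) + (c j)^2 / D (j-1)"
proof -
  have s: "{1..n} = {1..<j} \<union> ({j..<n} \<union> {n})" using assms by auto
  have s1: "(\<Sum>i\<in>{1..<j}. G j i * G j i) = (c j)^2 / (D (j-1))^2 * (\<Sum>i\<in>{1..<j}. (w i)^2)"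
    unfolding sum_distrib_left by (rule sum.cong) (auto simp: G_def power2_eq_square)
  have wsum: "(\<Sum>i\<in>{1..<j}. (w i)^2) = D (j-1) - 1"
  proof -
    have "{1..<j} = {1..j-1}" using assms by auto
    then show ?thesis by (simp add: D_eq)
  qed
  have s2: "(\<Sum>i\<in>{j..<n}. G j i * G j i) = (\<Sum>i\<in>{j..<n}. if i = j then (a j)^2 else 0)"
    by (rule sum.cong) (auto simp: G_def power2_eq_square)
  have s3: "(\<Sum>i\<in>{j..<n}. if i = j then (a j)^2 else 0) = (if j < n then (a j)^2 else 0)"
    by simp
  have s4: "G j n * G j n = (c j)^2 / (D (j-1))^2"
    using assms by (simp add: G_def power2_eq_square)
  have "ipn n (G j) (G j) = (c j)^2 / (D (j-1))^2 * (D (j-1) - 1) + (if j < n then (a j)^2 else 0) + (c j)^2 / (D (j-1))^2"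
    unfolding ipn_def split3[OF assms] s1 wsum s2 s3
    using assms by (simp add: s4)
  also have "\<dots> = (if j < n then (a j)^2 else 0) + (c j)^2 / D (j-1)"
    using D_pos[of "j-1"] by (simp add: field_simps power2_eq_square)
  finally show ?thesis .
qed

lemma Gsum: assumes "1 \<le> k" "k \<le> n" "i \<in> {1..n}"
  shows "(\<Sum>j\<in>{1..<k}. (w j / (a j * D j)) * G j i) =
     (if i < k then w i / D (k-1) else if i < n then 0 else 1 - 1 / D (k-1))"
proof -
  consider "i < k" | "\<not> i < k" "i < n" | "i = n" using assms by fastforce
  then show ?thesis
  proof cases
    case 1
    have s: "{1..<k} = {1..<i} \<union> ({i} \<union> {i<..<k})" using 1 assms by auto
    have z: "(\<Sum>j\<in>{1..<i}. (w j / (a j * D j)) * G j i) = 0"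
      by (rule sum.neutral) (use 1 assms in \<open>auto simp: G_def\<close>)
    have ai: "a i > 0" using 1 assms a_pos by auto
    have i1: "1 \<le> i" using assms by auto
    have tk: "(\<Sum>j\<in>{i<..k-1}. (w j)^2 / (D j * D (j-1))) = 1 / D i - 1 / D (k-1)"
      using tele[of i "k-1"] 1 by simp
    have m: "(w i / (a i * D i)) * G i i = w i / D i"
      using 1 assms ai by (simp add: G_def)
    have t: "(\<Sum>j\<in>{i<..<k}. (w j / (a j * D j)) * G j i) = (\<Sum>j\<in>{i<..k-1}. - w i * ((w j)^2 / (D j * D (j-1))))"
    proof -
      have e: "{i<..<k} = {i<..k-1}" using 1 by auto
      show ?thesis unfolding e
      proof (rule sum.cong)
        fix j assume j: "j \<in> {i<..k-1}"
        then have j1: "1 \<le> j" "j < n" using 1 assms by auto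
        have aj: "a j > 0" using a_pos j1 by auto
        show "(w j / (a j * D j)) * G j i = - w i * ((w j)^2 / (D j * D (j-1)))"
        proof -
          have cj: "c j = a j * w j" using w_eq[OF j1] aj by simp
          show ?thesis using j aj by (simp add: G_def cj power2_eq_square field_simps)
        qed
      qed simp
    qed
    have "(\<Sum>j\<in>{1..<k}. (w j / (a j * D j)) * G j i) = w i / D i - w i * (1 / D i - 1 / D (k-1))"
      unfolding split3b[of i k, OF i1 1] z m t
        sum_distrib_left[symmetric] tk
      using 1 by auto
    also have "\<dots> = w i / D (k-1)" by (simp add: field_simps)
    finally show ?thesis using 1 by simp
  next
    case 2
    have "(\<Sum>j\<in>{1..<k}. (w j / (a j * D j)) * G j i) = 0"
      by (rule sum.neutral) (use 2 assms in \<open>auto simp: G_def\<close>)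
    then show ?thesis using 2 by simp
  next
    case 3
    have "(\<Sum>j\<in>{1..<k}. (w j / (a j * D j)) * G j i) = (\<Sum>j\<in>{0<..k-1}. (w j)^2 / (D j * D (j-1)))"
    proof -
      have e: "{1..<k} = {0<..k-1}" using assms by auto
      show ?thesis unfolding e
      proof (rule sum.cong)
        fix j assume j: "j \<in> {0<..k-1}"
        then have j1: "1 \<le> j" "j < n" using 3 assms by auto
        have aj: "a j > 0" using a_pos j1 by auto
        show "(w j / (a j * D j)) * G j i = (w j)^2 / (D j * D (j-1))"
        proof -
          have cj: "c j = a j * w j" using w_eq[OF j1] aj by simp
          show ?thesis using j j1 3 aj by (simp add: G_def cj power2_eq_square field_simps)
        qed
      qed simp
    qed
    also have "\<dots> = 1 - 1 / D (k-1)" using tele[of 0 "k-1"] D_0 by simp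
    finally show ?thesis using 3 assms by simp
  qed
qed

lemma gso_G: "1 \<le> k \<Longrightarrow> k \<le> n \<Longrightarrow> i \<in> {1..n} \<Longrightarrow> gso n v k i = G k i"
proof (induction k arbitrary: i rule: less_induct)
  case (less k)
  have IH: "\<And>j. j \<in> {1..<k} \<Longrightarrow> \<forall>i\<in>{1..n}. gso n v j i = G j i" 
    using less by auto
  have mu: "ipn n (v k) (gso n v j) / ipn n (gso n v j) (gso n v j) = c k * (w j / (a j * D j))"
    if j: "j \<in> {1..<k}" for j
  proof -
    have e1: "ipn n (v k) (gso n v j) = ipn n (v k) (G j)"
      unfolding ipn_def by (rule sum.cong) (use IH[OF j] in auto)
    have e2: "ipn n (gso n v j) (gso n v j) = ipn n (G j) (G j)"
      unfolding ipn_def by (rule sum.cong) (use IH[OF j] in auto)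
    have j1: "1 \<le> j" "j < n" "j < k" using j less.prems by auto
    have aj: "a j > 0" using a_pos j1 by auto
    have Dj: "D j = D (j-1) + (w j)^2" using D_Suc[of "j-1"] j1 by simp
    have Dp: "D (j-1) > 0" by (rule D_pos)
    show ?thesis unfolding e1 e2 ipn_vG[OF j1(1) j1(3) less.prems(2)] ipn_GG[OF j1(1) less_imp_le[OF j1(2)]]
    proof -
      have cj: "c j = a j * w j" using w_eq[OF j1(1,2)] aj by simp
      show "c k * c j / D (j - 1) / ((if j < n then (a j)\<^sup>2 else 0) + (c j)\<^sup>2 / D (j - 1)) = c k * (w j / (a j * D j))"
      proof -
        have q: "(a j)^2 + (a j * w j)^2 / D (j-1) = (a j)^2 * D j / D (j-1)"
          using Dj Dp by (simp add: field_simps power2_eq_square)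
        show ?thesis
          unfolding cj using j1 q aj Dp D_pos[of j] by (simp add: field_simps power2_eq_square)
      qed
    qed
  qed
  have g0: "gso n v k i = v k i - (\<Sum>j\<in>{1..<k}. (ipn n (v k) (gso n v j) / ipn n (gso n v j) (gso n v j)) * gso n v j i)"
    by (subst gso.simps) simp
  have g1: "(\<Sum>j\<in>{1..<k}. (ipn n (v k) (gso n v j) / ipn n (gso n v j) (gso n v j)) * gso n v j i)
     = (\<Sum>j\<in>{1..<k}. (c k * (w j / (a j * D j))) * G j i)"
    by (rule sum.cong) (use mu IH less.prems(3) in auto)
  have "gso n v k i = v k i - (\<Sum>j\<in>{1..<k}. (c k * (w j / (a j * D j))) * G j i)"
    using g0 g1 by simp
  also have "\<dots> = v k i - c k * (\<Sum>j\<in>{1..<k}. (w j / (a j * D j)) * G j i)"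
    by (simp add: sum_distrib_left mult.assoc)
  also have "\<dots> = G k i"
    unfolding Gsum[OF less.prems] using less.prems D_pos[of "k-1"]
    by (auto simp: v_eq G_def field_simps)
  finally show ?case .
qed

end

lemma nth_prime_ln_pos: "ln (real (nth_prime k)) > 0"
proof -
  have "prime (nth_prime k)" unfolding nth_prime_def
    using enumerate_in_set[OF primes_infinite] by simp
  then have "nth_prime k \<ge> 2" by (simp add: prime_ge_2_nat)
  then show ?thesis by simp
qed

theorem theorem4:
  fixes d N :: nat and C p :: real
    and b :: "nat \<Rightarrow> nat \<Rightarrow> real" and t :: "nat \<Rightarrow> real" and v :: "nat \<Rightarrow> nat \<Rightarrow> real" and D :: "nat \<Rightarrow> real"
  assumes hd: "d \<ge> 1" and hN: "N \<ge> 1" and hC: "C > 0" and hp: "p \<ge> 1"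
    and b_def: "\<And>k i. b k i = (if i = k then (ln (real (nth_prime k))) powr (1/p)
                  else if i = d + 1 then C * ln (real (nth_prime k)) else 0)"
    and t_def: "\<And>i. t i = (if i = d + 1 then C * ln (real N) else 0)"
    and v_def: "\<And>k. v k = (if k \<le> d then b k else t)"
    and D_def: "\<And>j. D j = 1 + C^2 * (\<Sum>i=1..j. (ln (real (nth_prime i))) powr (2 - 2/p))"
  shows
    "(\<forall>k\<in>{1..d}. \<forall>i\<in>{1..d+1}.
        gso (d+1) v k i =
          (if i < k then - (C^2 * ln (real (nth_prime k)) * (ln (real (nth_prime i))) powr (1 - 1/p)) / D (k - 1)
           else if i = k then (ln (real (nth_prime k))) powr (1/p)
           else if i < d + 1 then 0
           else C * ln (real (nth_prime k)) / D (k - 1)))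
   \<and> (\<forall>i\<in>{1..d+1}.
        gso (d+1) v (d+1) i =
          (if i < d + 1 then - (C^2 * ln (real N) * (ln (real (nth_prime i))) powr (1 - 1/p)) / D d
           else C * ln (real N) / D d))
   \<and> (\<forall>k\<in>{1..d}. sqnorm (d+1) (gso (d+1) v k) =
          (ln (real (nth_prime k))) powr (2/p) * D k / D (k - 1))
   \<and> sqnorm (d+1) (gso (d+1) v (d+1)) = (C * ln (real N))^2 / D d
   \<and> (\<forall>i\<in>{1..d+1}.
        t i - gso (d+1) v (d+1) i =
          (if i < d + 1 then C^2 * ln (real N) * (ln (real (nth_prime i))) powr (1 - 1/p) / D d
           else C * ln (real N) * (D d - 1) / D d))"
proof -
  define L where "L k = ln (real (nth_prime k))" for k
  have Lpos: "L k > 0" for k unfolding L_def by (rule nth_prime_ln_pos)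
  define a where "a k = L k powr (1/p)" for k
  define c where "c k = (if k < d + 1 then C * L k else C * ln (real N))" for k
  define w where "w k = C * L k powr (1 - 1/p)" for k
  have wsq: "(w i)^2 = C^2 * L i powr (2 - 2/p)" for i
  proof -
    have "(w i)^2 = C^2 * (L i powr (1 - 1/p) * L i powr (1 - 1/p))"
      unfolding w_def by (simp add: power2_eq_square)
    also have "\<dots> = C^2 * L i powr (2 - 2/p)"
      by (simp add: powr_add[symmetric])
    finally show ?thesis .
  qed
  interpret gsset "d+1" a c w D v
  proof
    show "1 \<le> d+1" by simp
    show "\<And>k. 1 \<le> k \<Longrightarrow> k < d+1 \<Longrightarrow> 0 < a k" unfolding a_def using Lpos by (simp add: less_imp_neq[symmetric])
    show "v k i = (if i = k \<and> k < d+1 then a k else if i = d+1 then c k else 0)"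
      if "1 \<le> k" "k \<le> d+1" for k i
      using that unfolding v_def b_def t_def a_def c_def L_def by auto
    show "w i = c i / a i" if "1 \<le> i" "i < d+1" for i
    proof -
      have "L i powr (1 - 1/p) = L i / L i powr (1/p)"
        using Lpos[of i] by (simp add: powr_diff)
      then show ?thesis using that unfolding w_def c_def a_def by simp
    qed
    show "D j = 1 + (\<Sum>i = 1..j. (w i)\<^sup>2)" for j
      unfolding D_def wsq L_def by (simp add: sum_distrib_left)
  qed
  have GG: "gso (d+1) v k i = G k i" if "1 \<le> k" "k \<le> d+1" "i \<in> {1..d+1}" for k i
    using gso_G that by auto
  have sq: "sqnorm (d+1) (gso (d+1) v k) = (if k < d+1 then (a k)^2 else 0) + (c k)^2 / D (k-1)"
    if "1 \<le> k" "k \<le> d+1" for k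
  proof -
    have "sqnorm (d+1) (gso (d+1) v k) = ipn (d+1) (G k) (G k)"
      unfolding sqnorm_def ipn_def by (rule sum.cong) (use GG that in \<open>auto simp: power2_eq_square\<close>)
    then show ?thesis using ipn_GG[of k] that by simp
  qed
  show ?thesis
  proof (intro conjI ballI)
    fix k i assume k: "k \<in> {1..d}" and i: "i \<in> {1..d+1}"
    show "gso (d+1) v k i =
          (if i < k then - (C^2 * ln (real (nth_prime k)) * (ln (real (nth_prime i))) powr (1 - 1/p)) / D (k - 1)
           else if i = k then (ln (real (nth_prime k))) powr (1/p)
           else if i < d + 1 then 0
           else C * ln (real (nth_prime k)) / D (k - 1))"
      using GG[of k i] k i unfolding G_def a_def c_def w_def L_def
      by (auto simp: power2_eq_square)
  next
    fix i assume i: "i \<in> {1..d+1}"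
    show "gso (d+1) v (d+1) i =
          (if i < d + 1 then - (C^2 * ln (real N) * (ln (real (nth_prime i))) powr (1 - 1/p)) / D d
           else C * ln (real N) / D d)"
      using GG[of "d+1" i] i unfolding G_def a_def c_def w_def L_def
      by (auto simp: power2_eq_square)
  next
    fix k assume k: "k \<in> {1..d}"
    have Dk: "D k = D (k-1) + (w k)^2" using D_Suc[of "k-1"] k by simp
    have ak: "a k > 0" unfolding a_def using Lpos by (simp add: less_imp_neq[symmetric])
    have ck: "c k = a k * w k" using w_eq[of k] k ak by auto
    have a2: "(a k)^2 = L k powr (2/p)" unfolding a_def
      by (simp add: power2_eq_square powr_add[symmetric])
    have "sqnorm (d+1) (gso (d+1) v k) = (a k)^2 + (c k)^2 / D (k-1)"
      using sq[of k] k by auto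
    also have "\<dots> = (a k)^2 * D k / D (k-1)"
      using D_pos[of "k-1"] unfolding Dk ck by (simp add: field_simps power2_eq_square)
    finally show "sqnorm (d+1) (gso (d+1) v k) = (ln (real (nth_prime k))) powr (2/p) * D k / D (k - 1)"
      unfolding a2 L_def .
  next
    show "sqnorm (d+1) (gso (d+1) v (d+1)) = (C * ln (real N))^2 / D d"
      using sq[of "d+1"] unfolding c_def by simp
  next
    fix i assume i: "i \<in> {1..d+1}"
    show "t i - gso (d+1) v (d+1) i =
          (if i < d + 1 then C^2 * ln (real N) * (ln (real (nth_prime i))) powr (1 - 1/p) / D d
           else C * ln (real N) * (D d - 1) / D d)"
      using GG[of "d+1" i] i D_pos[of d] unfolding G_def a_def c_def w_def L_def t_def
      by (auto simp: power2_eq_square field_simps)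
  qed
qed

end
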